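(* If $\alpha>-1$, $\alpha\ne0$, then \begin{equation*} \langle\!\langle f_\alpha\rangle\!\rangle_{\mathbb R}= \langle\!\langle f_\alpha\rangle\!\rangle_{\mathbb R_+}\cdot \max_{0\le\eta\le1}\psi(\alpha,\eta), \end{equation*} where \begin{equation*} \psi(\alpha,\eta)=\left\{\begin{array}{ll} \displaystyle\frac{\left(1+\eta^{\alpha+1}\right)^{1/\alpha}}{(1+\eta)^{(\alpha+1)/\alpha}}+ \frac{(\alpha+1)^{(\alpha+1)/\alpha}}\alpha \left[\frac1{1+\eta^{\alpha+1}}-\frac1{1+\eta}\right],& \text{ if }\; 0\le\eta\le\eta_1,\\[10pt] \displaystyle 2\frac{\left(1+\eta^{\alpha+1}\right)^{1/\alpha}}{(1+\eta)^{(\alpha+1)/\alpha}},& \text{ if }\; \eta_1\le\eta\le1, \end{array}\right. \end{equation*} and $\eta_1=\eta_1(\alpha)\in(0,1)$ is the root of the equation \begin{equation*} \eta^\alpha=\frac1{1+\alpha(\eta+1)}. \end{equation*}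
   Context: Let $R$ be $\mathbb R$ or $\mathbb R_+=[0,\infty)$. For a non-negative function $f$ locally summable on $R$ and a bounded interval $I\subset R$, set $f_I=\frac1{|I|}\int_I f(x)\,dx$ and $\Omega(f;I)=\frac1{|I|}\int_I|f(x)-f_I|\,dx$. The relative oscillation is $\langle f\rangle_I=\Omega(f;I)/f_I$, and the Gurov--Reshetnyak "norm" of $f$ on $R$ is $\langle\!\langle f\rangle\!\rangle_R=\sup_{I\subset R}\langle f\rangle_I$, the supremum over bounded subintervals $I$ of $R$. Let $f_\alpha(x)=|x|^\alpha$ ($x\in\mathbb R$, $\alpha>-1$). (One has $\langle\!\langle f_\alpha\rangle\!\rangle_{\mathbb R_+}=\langle f_\alpha\rangle_{(0,1)}=2|\alpha|/(\alpha+1)^{(\alpha+1)/\alpha}$.) *)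

theory Defs
  imports "HOL-Analysis.Analysis"
begin

definition mean_val :: "(real \<Rightarrow> real) \<Rightarrow> real \<Rightarrow> real \<Rightarrow> real" where
  "mean_val f a b = (LINT x:{a..b}|lborel. f x) / (b - a)"

definition mean_osc :: "(real \<Rightarrow> real) \<Rightarrow> real \<Rightarrow> real \<Rightarrow> real" where
  "mean_osc f a b = (LINT x:{a..b}|lborel. \<bar>f x - mean_val f a b\<bar>) / (b - a)"

definition rel_osc :: "(real \<Rightarrow> real) \<Rightarrow> real \<Rightarrow> real \<Rightarrow> real" where
  "rel_osc f a b = mean_osc f a b / mean_val f a b"

definition GR_norm :: "(real \<Rightarrow> real) \<Rightarrow> real set \<Rightarrow> real" where
  "GR_norm f R = (SUP ab \<in> {(a, b). a < b \<and> {a..b} \<subseteq> R}. rel_osc f (fst ab) (snd ab))"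

definition f_alpha :: "real \<Rightarrow> real \<Rightarrow> real" where
  "f_alpha \<alpha> x = \<bar>x\<bar> powr \<alpha>"

definition eta1 :: "real \<Rightarrow> real" where
  "eta1 \<alpha> = (THE \<eta>. 0 < \<eta> \<and> \<eta> < 1 \<and> \<eta> powr \<alpha> = 1 / (1 + \<alpha> * (\<eta> + 1)))"

definition psi :: "real \<Rightarrow> real \<Rightarrow> real" where
  "psi \<alpha> \<eta> =
     (if \<eta> \<le> eta1 \<alpha> then
        (1 + \<eta> powr (\<alpha> + 1)) powr (1 / \<alpha>) / (1 + \<eta>) powr ((\<alpha> + 1) / \<alpha>)
        + (\<alpha> + 1) powr ((\<alpha> + 1) / \<alpha>) / \<alpha>
          * (1 / (1 + \<eta> powr (\<alpha> + 1)) - 1 / (1 + \<eta>))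
      else
        2 * (1 + \<eta> powr (\<alpha> + 1)) powr (1 / \<alpha>) / (1 + \<eta>) powr ((\<alpha> + 1) / \<alpha>))"

end

theory Submission
  imports Defs
begin


lemma fa_meas: "f_alpha a \<in> borel_measurable borel"
  unfolding f_alpha_def by measurable

lemma fa_nonneg: "0 \<le> f_alpha a x" unfolding f_alpha_def by simp

lemma fa_uminus[simp]: "f_alpha a (-x) = f_alpha a x" unfolding f_alpha_def by simp

definition GG :: "real \<Rightarrow> real \<Rightarrow> real" where
  "GG a x = (if 0 \<le> x then x powr (a+1) else - ((-x) powr (a+1))) / (a+1)"

lemma int_pos:
  fixes a p q :: real
  assumes a: "a > -1" and p: "0 \<le> p" "p \<le> q"
  shows "((\<lambda>x. x powr a) has_integral (q powr (a+1) - p powr (a+1))/(a+1)) {p..q}"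
proof -
  have hq: "((\<lambda>x. x powr a) has_integral (q powr (a+1) / (a+1))) {0..q}"
    using has_integral_powr_from_0[of a q] a p by auto
  have hp: "((\<lambda>x. x powr a) has_integral (p powr (a+1) / (a+1))) {0..p}"
    using has_integral_powr_from_0[of a p] a p by auto
  have ip: "(\<lambda>x. x powr a) integrable_on {p..q}"
    using integrable_subinterval_real[OF has_integral_integrable[OF hq], of p q] p by auto
  have "integral {0..p} (\<lambda>x. x powr a) + integral {p..q} (\<lambda>x. x powr a) = integral {0..q} (\<lambda>x. x powr a)"
    using Henstock_Kurzweil_Integration.integral_combine[OF p(1) p(2) has_integral_integrable[OF hq]] .
  then have "integral {p..q} (\<lambda>x. x powr a) = (q powr (a+1) - p powr (a+1))/(a+1)"
    using integral_unique[OF hq] integral_unique[OF hp] by (simp add: diff_divide_distrib)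
  then show ?thesis using ip by (metis has_integral_integral)
qed

lemma int_fa:
  assumes a: "a > -1" and pq: "p \<le> q"
  shows "(f_alpha a has_integral GG a q - GG a p) {p..q}"
proof -
  have pos: "(f_alpha a has_integral GG a q - GG a p) {p..q}" if "0 \<le> p" "p \<le> q" for p q
  proof -
    have "((\<lambda>x. x powr a) has_integral GG a q - GG a p) {p..q}"
      using int_pos[OF a that] that unfolding GG_def by (simp add: diff_divide_distrib)
    moreover have "\<And>x. x \<in> {p..q} - {} \<Longrightarrow> f_alpha a x = x powr a"
      using that by (auto simp: f_alpha_def)
    ultimately show ?thesis
      by (intro has_integral_spike_finite[of "{}" "{p..q}" "f_alpha a" "\<lambda>x. x powr a"]) auto
  qed
  have neg: "(f_alpha a has_integral GG a q - GG a p) {p..q}" if "q \<le> 0" "p \<le> q" for p q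
  proof -
    have "(f_alpha a has_integral GG a (-p) - GG a (-q)) {-q..-p}" using pos that by auto
    then have "((\<lambda>x. f_alpha a (-x)) has_integral GG a (-p) - GG a (-q)) {-q..-p}"
      by simp
    then have "(f_alpha a has_integral GG a (-p) - GG a (-q)) {p..q}"
      using has_integral_reflect_real[of "f_alpha a" "GG a (-p) - GG a (-q)" q p] by simp
    moreover have "GG a (-p) - GG a (-q) = GG a q - GG a p"
      using that unfolding GG_def by (cases "q = 0"; cases "p = 0") (auto simp: field_simps)
    ultimately show ?thesis by simp
  qed
  show ?thesis
  proof (cases "0 \<le> p")
    case True then show ?thesis using pos pq by auto
  next
    case False
    show ?thesis
    proof (cases "q \<le> 0")
      case True then show ?thesis using neg pq by auto
    next
      case False2: False
      have "(f_alpha a has_integral GG a 0 - GG a p) {p..0}" using neg False by auto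
      moreover have "(f_alpha a has_integral GG a q - GG a 0) {0..q}" using pos False2 by auto
      ultimately have "(f_alpha a has_integral (GG a 0 - GG a p) + (GG a q - GG a 0)) {p..q}"
        using has_integral_combine[of p 0 q "f_alpha a" "GG a 0 - GG a p" "GG a q - GG a 0"] False False2 by auto
      then show ?thesis by simp
    qed
  qed
qed

lemma int_abs_ge:
  assumes a: "a > -1" and pq: "p \<le> q" and ge: "\<And>x. x \<in> {p..q} \<Longrightarrow> x \<noteq> 0 \<Longrightarrow> m \<le> f_alpha a x"
  shows "((\<lambda>x. \<bar>f_alpha a x - m\<bar>) has_integral (GG a q - GG a p - m*(q-p))) {p..q}"
proof -
  have h: "((\<lambda>x. f_alpha a x - m) has_integral (GG a q - GG a p - m*(q-p))) {p..q}"
    using has_integral_diff[OF int_fa[OF a pq] has_integral_const_real[of m p q]] pq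
    by (simp add: mult.commute)
  have *: "\<And>x. x \<in> {p..q} - {0} \<Longrightarrow> \<bar>f_alpha a x - m\<bar> = f_alpha a x - m" using ge by fastforce
  show ?thesis by (rule has_integral_spike_finite[where S="{0}", OF _ * h]) simp
qed

lemma int_abs_le:
  assumes a: "a > -1" and pq: "p \<le> q" and le: "\<And>x. x \<in> {p..q} \<Longrightarrow> x \<noteq> 0 \<Longrightarrow> f_alpha a x \<le> m"
  shows "((\<lambda>x. \<bar>f_alpha a x - m\<bar>) has_integral (m*(q-p) - (GG a q - GG a p))) {p..q}"
proof -
  have h: "((\<lambda>x. m - f_alpha a x) has_integral (m*(q-p) - (GG a q - GG a p))) {p..q}"
    using has_integral_diff[OF has_integral_const_real[of m p q] int_fa[OF a pq]] pq
    by (simp add: mult.commute)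
  have *: "\<And>x. x \<in> {p..q} - {0} \<Longrightarrow> \<bar>f_alpha a x - m\<bar> = m - f_alpha a x" using le by fastforce
  show ?thesis by (rule has_integral_spike_finite[where S="{0}", OF _ * h]) simp
qed


lemma fa_setint:
  assumes a: "a > -1" and pq: "p \<le> q"
  shows "set_integrable lborel {p..q} (f_alpha a)"
proof -
  have "f_alpha a absolutely_integrable_on {p..q}"
    using nonnegative_absolutely_integrable_1[OF has_integral_integrable[OF int_fa[OF a pq]]] fa_nonneg by blast
  then have "integrable lebesgue (\<lambda>x. indicator {p..q} x *\<^sub>R f_alpha a x)"
    by (simp add: set_integrable_def)
  moreover have "(\<lambda>x. indicator {p..q} x *\<^sub>R f_alpha a x) \<in> borel_measurable lborel"
    using fa_meas by measurable
  ultimately have "integrable lborel (\<lambda>x. indicator {p..q} x *\<^sub>R f_alpha a x)"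
    using integrable_completion by blast
  then show ?thesis by (simp add: set_integrable_def)
qed

lemma mv_eq:
  assumes a: "a > -1" and pq: "p < q"
  shows "mean_val (f_alpha a) p q = (GG a q - GG a p)/(q-p)"
  unfolding mean_val_def
  using set_borel_integral_eq_integral(2)[OF fa_setint[OF a]] integral_unique[OF int_fa[OF a]] pq
  by simp

lemma mo_eq:
  assumes a: "a > -1" and pq: "p < q"
  shows "mean_osc (f_alpha a) p q = integral {p..q} (\<lambda>x. \<bar>f_alpha a x - mean_val (f_alpha a) p q\<bar>)/(q-p)"
proof -
  let ?m = "mean_val (f_alpha a) p q"
  have "set_integrable lborel {p..q} (\<lambda>x. ?m)"
    by (rule borel_integrable_atLeastAtMost') (rule continuous_on_const)
  then have "set_integrable lborel {p..q} (\<lambda>x. \<bar>f_alpha a x - ?m\<bar>)"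
    using fa_setint[OF a, of p q] pq by (intro set_integrable_abs set_integral_diff) auto
  then show ?thesis unfolding mean_osc_def using set_borel_integral_eq_integral(2) by metis
qed

lemma osc_int:
  assumes a: "a > -1" and pq: "p < q"
  shows "(\<lambda>x. \<bar>f_alpha a x - m\<bar>) integrable_on {p..q}"
proof -
  have "set_integrable lborel {p..q} (\<lambda>x. m)"
    by (rule borel_integrable_atLeastAtMost') (rule continuous_on_const)
  then have "set_integrable lborel {p..q} (\<lambda>x. \<bar>f_alpha a x - m\<bar>)"
    using fa_setint[OF a, of p q] pq by (intro set_integrable_abs set_integral_diff) auto
  then show ?thesis using set_borel_integral_eq_integral(1) by metis
qed


lemma GG_odd: "GG a (-x) = - GG a x"
  unfolding GG_def by (cases "x = 0") auto

lemma GG_scale: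
  assumes c: "c > 0"
  shows "GG a (x / c) = GG a x / c powr (a+1)"
proof (cases "0 \<le> x")
  case True then show ?thesis using c unfolding GG_def by (simp add: powr_divide)
next
  case False
  have "(-(x/c)) powr (a+1) = (-x) powr (a+1) / c powr (a+1)"
    using powr_divide[of "-x" c "a+1"] False c by simp
  then show ?thesis using False c unfolding GG_def by (simp add: divide_nonneg_pos zero_le_divide_iff)
qed

lemma fa_scale: "c > 0 \<Longrightarrow> f_alpha a (c * x) = c powr a * f_alpha a x"
  unfolding f_alpha_def by (simp add: abs_mult powr_mult)

lemma rel_osc_reflect:
  assumes a: "a > -1" and pq: "p < q"
  shows "rel_osc (f_alpha a) (-q) (-p) = rel_osc (f_alpha a) p q"
proof -
  have mv: "mean_val (f_alpha a) (-q) (-p) = mean_val (f_alpha a) p q"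
    using mv_eq[OF a, of "-q" "-p"] mv_eq[OF a pq] pq by (simp add: GG_odd)
  have "integral {-q..-p} (\<lambda>x. \<bar>f_alpha a x - mean_val (f_alpha a) p q\<bar>)
      = integral {p..q} (\<lambda>x. \<bar>f_alpha a x - mean_val (f_alpha a) p q\<bar>)"
    using Henstock_Kurzweil_Integration.integral_reflect_real[where f="\<lambda>y. \<bar>f_alpha a y - mean_val (f_alpha a) p q\<bar>" and a=p and b=q] by simp
  then have "mean_osc (f_alpha a) (-q) (-p) = mean_osc (f_alpha a) p q"
    using mo_eq[OF a, of "-q" "-p"] mo_eq[OF a pq] pq mv by simp
  then show ?thesis unfolding rel_osc_def using mv by simp
qed

lemma rel_osc_scale:
  assumes a: "a > -1" and pq: "p < q" and c: "c > 0"
  shows "rel_osc (f_alpha a) (p/c) (q/c) = rel_osc (f_alpha a) p q"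
proof -
  let ?m = "mean_val (f_alpha a) p q"
  define k where "k = c powr a"
  have k: "k > 0" using c by (simp add: k_def)
  have pq': "p/c < q/c" using pq c by (simp add: divide_strict_right_mono)
  have cb: "c powr (a+1) = c * k" using c by (simp add: k_def powr_add)
  have "mean_val (f_alpha a) (p/c) (q/c) = (GG a (q/c) - GG a (p/c)) / (q/c - p/c)"
    using mv_eq[OF a pq'] .
  also have "\<dots> = ((GG a q - GG a p) / (c*k)) / ((q - p)/c)"
    using c by (simp add: GG_scale cb diff_divide_distrib)
  also have "\<dots> = ((GG a q - GG a p) / (q - p)) / k"
    using c k pq by (simp add: field_simps)
  finally have mv: "mean_val (f_alpha a) (p/c) (q/c) = ?m / k"
    using mv_eq[OF a pq] by simp
  have e1: "integral {p/c..q/c} (\<lambda>x. \<bar>f_alpha a (c*x) - ?m\<bar>) = (1/c) * integral {p..q} (\<lambda>y. \<bar>f_alpha a y - ?m\<bar>)"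
    using integral_stretch_real[of c p q "\<lambda>y. \<bar>f_alpha a y - ?m\<bar>"] c by (simp add: image_divide_atLeastAtMost)
  have e2: "\<And>x. \<bar>f_alpha a (c*x) - ?m\<bar> = \<bar>f_alpha a x - ?m / k\<bar> * k"
  proof -
    fix x
    have "\<bar>k * f_alpha a x - ?m\<bar> = \<bar>f_alpha a x - ?m / k\<bar> * k"
      using k by (simp add: field_simps abs_mult_pos[symmetric] abs_mult)
    then show "\<bar>f_alpha a (c * x) - ?m\<bar> = \<bar>f_alpha a x - ?m / k\<bar> * k"
      using fa_scale[OF c] by (simp add: k_def)
  qed
  define J where "J = integral {p/c..q/c} (\<lambda>x. \<bar>f_alpha a x - ?m / k\<bar>)"
  define I where "I = integral {p..q} (\<lambda>y. \<bar>f_alpha a y - ?m\<bar>)"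
  have JI: "J * k = (1 / c) * I"
    unfolding J_def I_def e1[symmetric] e2 by (rule integral_mult_left[symmetric])
  have mo1: "mean_osc (f_alpha a) (p/c) (q/c) = J / (q/c - p/c)"
    using mo_eq[OF a pq'] unfolding J_def mv .
  have mo2: "mean_osc (f_alpha a) p q = I / (q - p)"
    using mo_eq[OF a pq] unfolding I_def .
  have mo: "mean_osc (f_alpha a) (p/c) (q/c) = mean_osc (f_alpha a) p q / k"
  proof -
    have "I = J*c*k" using JI c by (simp add: field_simps)
    then show ?thesis unfolding mo1 mo2 using c k pq by (simp add: field_simps)
  qed
  show ?thesis unfolding rel_osc_def mo mv using k by simp
qed



lemma h_mono:
  fixes a z1 z2 :: real
  assumes a: "a > -1" and z: "0 \<le> z1" "z1 \<le> z2"
  shows "a \<ge> 0 \<Longrightarrow> (z1+1) powr (a+1) - z1 powr (a+1) \<le> (z2+1) powr (a+1) - z2 powr (a+1)"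
    and "a \<le> 0 \<Longrightarrow> (z1+1) powr (a+1) - z1 powr (a+1) \<ge> (z2+1) powr (a+1) - z2 powr (a+1)"
proof -
  let ?k = "\<lambda>z. (z+1) powr (a+1) - z powr (a+1)"
  have cont: "continuous_on {z1..z2} ?k"
    using a z by (intro continuous_intros continuous_on_powr') auto
  have der: "(?k has_real_derivative ((a+1) * (z+1) powr a - (a+1) * z powr a)) (at z)" if "z > 0" for z
  proof -
    have d1: "((\<lambda>z. z powr (a+1)) has_real_derivative (a+1) * (z+1) powr (a+1-1)) (at (z+1))"
      using that by (intro has_real_derivative_powr) simp
    have d1': "((\<lambda>z. (z+1) powr (a+1)) has_real_derivative (a+1) * (z+1) powr a) (at z)"
      using d1 DERIV_shift[of "\<lambda>z. z powr (a+1)" "(a+1) * (z+1) powr a" z 1] by simp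
    have d2: "((\<lambda>z. z powr (a+1)) has_real_derivative (a+1) * z powr a) (at z)"
      using has_real_derivative_powr[OF that, of "a+1"] by simp
    show ?thesis using DERIV_diff[OF d1' d2] .
  qed
  show "a \<ge> 0 \<Longrightarrow> ?k z1 \<le> ?k z2"
  proof (rule DERIV_nonneg_imp_increasing_open[OF z(2) _ cont])
    fix x assume "a \<ge> 0" "z1 < x" "x < z2"
    then have x: "x > 0" using z by auto
    have "x powr a \<le> (x+1) powr a" using \<open>a \<ge> 0\<close> x by (intro powr_mono2) auto
    then show "\<exists>y. (?k has_real_derivative y) (at x) \<and> 0 \<le> y"
      using der[OF x] a by (intro exI[of _ "(a+1) * (x+1) powr a - (a+1) * x powr a"]) auto
  qed
  show "a \<le> 0 \<Longrightarrow> ?k z1 \<ge> ?k z2"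
  proof (rule DERIV_nonpos_imp_decreasing_open[OF z(2) _ cont])
    fix x assume "a \<le> 0" "z1 < x" "x < z2"
    then have x: "x > 0" using z by auto
    have "x powr a \<ge> (x+1) powr a" using \<open>a \<le> 0\<close> x by (intro powr_mono2') auto
    then show "\<exists>y. (?k has_real_derivative y) (at x) \<and> y \<le> 0"
      using der[OF x] a by (intro exI[of _ "(a+1) * (x+1) powr a - (a+1) * x powr a"]) auto
  qed
qed


lemma K_split:
  fixes a p x :: real
  assumes "0 \<le> p" "p < x"
  shows "x powr (a+1) - p powr (a+1) = (x-p) powr (a+1) * ((p/(x-p)+1) powr (a+1) - (p/(x-p)) powr (a+1))"
proof -
  have y: "x - p > 0" using assms by simp
  have "p/(x-p) + 1 = x/(x-p)" using y by (simp add: field_simps)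
  then have "(p/(x-p)+1) powr (a+1) = x powr (a+1) / (x-p) powr (a+1)"
    using assms y by (simp add: powr_divide)
  moreover have "(p/(x-p)) powr (a+1) = p powr (a+1) / (x-p) powr (a+1)"
    using assms y by (simp add: powr_divide)
  ultimately show ?thesis using y by (simp add: field_simps)
qed

lemma K_ineq:
  fixes a p x q :: real
  assumes a: "a > -1" and px: "0 \<le> p" "p \<le> x" "x \<le> q" "p < q"
  shows "a \<ge> 0 \<Longrightarrow> ((x-p)/(q-p)) powr (a+1) * (q powr (a+1) - p powr (a+1)) \<le> x powr (a+1) - p powr (a+1)"
    and "a \<le> 0 \<Longrightarrow> ((x-p)/(q-p)) powr (a+1) * (q powr (a+1) - p powr (a+1)) \<ge> x powr (a+1) - p powr (a+1)"
proof -
  let ?h = "\<lambda>z. (z+1) powr (a+1) - z powr (a+1)"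
  have main: "((x-p)/(q-p)) powr (a+1) * (q powr (a+1) - p powr (a+1)) = (x-p) powr (a+1) * ?h (p/(q-p))
     \<and> x powr (a+1) - p powr (a+1) = (x-p) powr (a+1) * ?h (p/(x-p)) \<and> p/(q-p) \<le> p/(x-p) \<and> 0 \<le> p/(q-p)"
    if "p < x"
  proof -
    have y: "x - p > 0" "x - p \<le> q - p" using that px by auto
    have "((x-p)/(q-p)) powr (a+1) * (q powr (a+1) - p powr (a+1))
          = (x-p) powr (a+1) / (q-p) powr (a+1) * ((q-p) powr (a+1) * ?h (p/(q-p)))"
      using K_split[of p q a] px y by (simp add: powr_divide)
    also have "\<dots> = (x-p) powr (a+1) * ?h (p/(q-p))" using y by simp
    finally show ?thesis using K_split[of p x a] px that y
      by (auto intro: divide_left_mono)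
  qed
  show "a \<ge> 0 \<Longrightarrow> ((x-p)/(q-p)) powr (a+1) * (q powr (a+1) - p powr (a+1)) \<le> x powr (a+1) - p powr (a+1)"
  proof (cases "p = x")
    case False
    assume a0: "a \<ge> 0"
    then show ?thesis using main[of] False px h_mono(1)[OF a _ _ a0, of "p/(q-p)" "p/(x-p)"]
      by (auto intro!: mult_left_mono)
  qed simp
  show "a \<le> 0 \<Longrightarrow> ((x-p)/(q-p)) powr (a+1) * (q powr (a+1) - p powr (a+1)) \<ge> x powr (a+1) - p powr (a+1)"
  proof (cases "p = x")
    case False
    assume a0: "a \<le> 0"
    then show ?thesis using main[of] False px h_mono(2)[OF a _ _ a0, of "p/(q-p)" "p/(x-p)"]
      by (auto intro!: mult_left_mono)
  qed simp
qed


lemma Y1: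
  fixes a l :: real
  assumes a: "a > 0" and l: "0 \<le> l"
  shows "l - l powr (a+1) \<le> a * (a+1) powr (-(a+1)/a)"
proof -
  let ?b = "a+1"
  have Y: "(?b powr (1/?b) * l) * (?b powr (-1/?b)) \<le> (?b powr (1/?b) * l) powr ?b / ?b + (?b powr (-1/?b)) powr (?b/a) / (?b/a)"
    using a l by (intro Youngs_inequality) (auto simp: field_simps)
  have e1: "(?b powr (1/?b) * l) * (?b powr (-1/?b)) = l"
    using a by (simp add: powr_add[symmetric])
  have e2: "(?b powr (1/?b) * l) powr ?b / ?b = l powr ?b"
    using a l by (simp add: powr_mult powr_powr)
  have e3: "(?b powr (-1/?b)) powr (?b/a) / (?b/a) = a * ?b powr (-(a+1)/a)"
  proof -
    have "(?b powr (-1/?b)) powr (?b/a) = ?b powr (-1/a)" using a by (simp add: powr_powr)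
    moreover have "?b powr (-(a+1)/a) = ?b powr (-1/a) / ?b"
    proof -
      have ex: "-(a+1)/a = -1/a - 1" using a by (simp add: field_simps)
      have "?b powr (-(a+1)/a) = ?b powr (-1/a) / ?b powr 1"
        unfolding ex by (rule powr_diff)
      then show ?thesis using a by simp
    qed
    ultimately show ?thesis using a by simp
  qed
  have "l \<le> l powr ?b + a * ?b powr (-(a+1)/a)" using Y unfolding e1 e2 e3 .
  then show ?thesis by simp
qed

lemma Y2:
  fixes a l :: real
  assumes a: "a < 0" "a > -1" and l: "0 \<le> l"
  shows "l powr (a+1) - l \<le> - a * (a+1) powr (-(a+1)/a)"
proof -
  let ?b = "a+1"
  have Y: "(l powr ?b) * ?b \<le> (l powr ?b) powr (1/?b) / (1/?b) + ?b powr (-1/a) / (-1/a)"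
    using a l by (intro Youngs_inequality) (auto simp: field_simps)
  have e2: "(l powr ?b) powr (1/?b) / (1/?b) = ?b * l"
    using a l by (simp add: powr_powr)
  have e3: "?b powr (-1/a) / (-1/a) = ?b * (- a * ?b powr (-(a+1)/a))"
  proof -
    have ex: "-(a+1)/a = -1/a - 1" using a by (simp add: field_simps)
    have "?b powr (-(a+1)/a) = ?b powr (-1/a) / ?b powr 1"
      unfolding ex by (rule powr_diff)
    then have "?b powr (-(a+1)/a) = ?b powr (-1/a) / ?b" using a by simp
    then show ?thesis using a by (simp add: field_simps)
  qed
  have "?b * (l powr ?b) \<le> ?b * (l + - a * ?b powr (-(a+1)/a))"
    using Y e2 e3 by (simp add: algebra_simps)
  then show ?thesis using a by simp
qed


lemma GG_pos: "0 \<le> x \<Longrightarrow> GG a x = x powr (a+1) / (a+1)"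
  unfolding GG_def by simp

lemma lower_bd:
  assumes a: "a > -1" and pq: "p \<le> q" and ge: "\<And>x. x \<in> {p..q} \<Longrightarrow> x \<noteq> 0 \<Longrightarrow> c \<le> f_alpha a x"
  shows "c * (q - p) \<le> GG a q - GG a p"
  using has_integral_nonneg[OF int_abs_ge[OF a pq ge]] by auto

lemma upper_bd:
  assumes a: "a > -1" and pq: "p \<le> q" and le: "\<And>x. x \<in> {p..q} \<Longrightarrow> x \<noteq> 0 \<Longrightarrow> f_alpha a x \<le> c"
  shows "GG a q - GG a p \<le> c * (q - p)"
  using has_integral_nonneg[OF int_abs_le[OF a pq le]] by auto

lemma split_int:
  fixes g :: "real \<Rightarrow> real"
  assumes "p \<le> r" "r \<le> q"
    and "(g has_integral I1) {p..r}" "(g has_integral I2) {r..q}"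
  shows "integral {p..q} g = I1 + I2"
  using has_integral_combine[OF assms] by (rule integral_unique)

lemma rel_osc_formula:
  assumes a: "a > -1" and pq: "p < q"
    and I: "integral {p..q} (\<lambda>x. \<bar>f_alpha a x - mean_val (f_alpha a) p q\<bar>) = J"
  shows "rel_osc (f_alpha a) p q = J / (GG a q - GG a p)"
proof -
  have "mean_osc (f_alpha a) p q = J / (q - p)" using mo_eq[OF a pq] I by simp
  then show ?thesis unfolding rel_osc_def mv_eq[OF a pq] using pq by simp
qed

lemma root_pos_le:
  fixes a x y :: real
  assumes "a > 0" "0 \<le> x" "x powr a \<le> y"
  shows "x \<le> y powr (1/a)"
proof -
  have "(x powr a) powr (1/a) \<le> y powr (1/a)" using assms by (intro powr_mono2) auto
  then show ?thesis using assms by (simp add: powr_powr)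
qed

lemma root_pos_ge:
  fixes a x y :: real
  assumes "a > 0" "0 \<le> y" "y \<le> x powr a" "0 \<le> x"
  shows "y powr (1/a) \<le> x"
proof -
  have "y powr (1/a) \<le> (x powr a) powr (1/a)" using assms by (intro powr_mono2) auto
  then show ?thesis using assms by (simp add: powr_powr)
qed

lemma root_neg_le:
  fixes a x y :: real
  assumes "a < 0" "0 < x" "x powr a \<le> y"
  shows "y powr (1/a) \<le> x"
proof -
  have "y powr (1/a) \<le> (x powr a) powr (1/a)" using assms by (intro powr_mono2') auto
  then show ?thesis using assms by (simp add: powr_powr)
qed

lemma root_neg_ge:
  fixes a x y :: real
  assumes "a < 0" "0 < x" "y \<le> x powr a" "0 < y"
  shows "x \<le> y powr (1/a)"
proof -
  have "(x powr a) powr (1/a) \<le> y powr (1/a)" using assms by (intro powr_mono2') auto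
  then show ?thesis using assms by (simp add: powr_powr)
qed




lemma Rplus_pos:
  fixes a p q :: real
  assumes a: "a > 0" and pq: "0 \<le> p" "p < q"
  shows "rel_osc (f_alpha a) p q \<le> 2 * a * (a+1) powr (-(a+1)/a)"
proof -
  define b where "b = a + 1"
  have b: "b > 1" using a by (simp add: b_def)
  define m where "m = mean_val (f_alpha a) p q"
  define P where "P = p powr b"
  define Q where "Q = q powr b"
  have PQ: "P < Q" unfolding P_def Q_def using pq b by (intro powr_less_mono2) auto
  have mGG: "m * (q - p) = GG a q - GG a p" unfolding m_def using mv_eq[of a p q] a pq by simp
  have GGd: "GG a q - GG a p = (Q - P) / b" using pq by (simp add: GG_pos P_def Q_def b_def diff_divide_distrib)
  have "m * (q - p) > 0" using mGG GGd PQ b by simp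
  then have mpos: "m > 0" using pq by (simp add: zero_less_mult_iff)
  define r where "r = m powr (1/a)"
  have rm: "r powr a = m" using mpos a by (simp add: r_def powr_powr)
  have r0: "r \<ge> 0" by (simp add: r_def)
  have fx: "f_alpha a x = x powr a" if "x \<ge> 0" for x using that by (simp add: f_alpha_def)
  have lo: "p powr a * (q - p) \<le> GG a q - GG a p"
    using a pq by (intro lower_bd) (auto simp: fx intro!: powr_mono2)
  have hi: "GG a q - GG a p \<le> q powr a * (q - p)"
    using a pq by (intro upper_bd) (auto simp: fx intro!: powr_mono2)
  have "p powr a * (q-p) \<le> m * (q-p)" using lo mGG by simp
  then have "p powr a \<le> m" using pq by (meson diff_gt_0_iff_gt mult_right_le_imp_le)
  then have pr: "p \<le> r" unfolding r_def using a pq by (intro root_pos_le) auto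
  have "m * (q-p) \<le> q powr a * (q-p)" using hi mGG by simp
  then have "m \<le> q powr a" using pq by (meson diff_gt_0_iff_gt mult_right_le_imp_le)
  then have rq: "r \<le> q" unfolding r_def using a pq mpos by (intro root_pos_ge) auto
  have i1: "((\<lambda>x. \<bar>f_alpha a x - m\<bar>) has_integral (m*(r-p) - (GG a r - GG a p))) {p..r}"
  proof (rule int_abs_le)
    fix x assume x: "x \<in> {p..r}"
    have "x powr a \<le> r powr a" by (rule powr_mono2) (use x pq a in auto)
    then show "f_alpha a x \<le> m" using rm fx[of x] x pq by simp
  qed (use a pr in auto)
  have i2: "((\<lambda>x. \<bar>f_alpha a x - m\<bar>) has_integral (GG a q - GG a r - m*(q-r))) {r..q}"
  proof (rule int_abs_ge)
    fix x assume x: "x \<in> {r..q}"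
    have "r powr a \<le> x powr a" by (rule powr_mono2) (use x r0 a in auto)
    then show "m \<le> f_alpha a x" using rm fx[of x] x r0 by simp
  qed (use a rq in auto)
  define J where "J = m*(r-p) - (GG a r - GG a p) + (GG a q - GG a r - m*(q-r))"
  have rel: "rel_osc (f_alpha a) p q = J / (GG a q - GG a p)"
    using a pq split_int[OF pr rq i1 i2] by (intro rel_osc_formula) (auto simp: m_def J_def)
  define L where "L = (r - p) / (q - p)"
  define R where "R = r powr b"
  have L0: "0 \<le> L" using pr pq by (simp add: L_def)
  have K: "L powr b * (Q - P) \<le> R - P"
    using K_ineq(1)[of a p r q] a pq pr rq by (simp add: L_def R_def P_def Q_def b_def)
  have Y: "L - L powr b \<le> a * (a+1) powr (-(a+1)/a)"
    using Y1[OF a L0] by (simp add: b_def)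
  define D where "D = (Q - P) / b"
  have D: "D > 0" using PQ b by (simp add: D_def)
  have mD: "m * (q - p) = D" using mGG GGd by (simp add: D_def)
  have J2: "J = 2 * D * L - 2 * (R - P) / b"
  proof -
    have e1: "m * (r - p) = D * L" unfolding L_def mD[symmetric] using pq by simp
    have e2: "m * (q - r) = D * (1 - L)" unfolding L_def mD[symmetric] using pq by (simp add: field_simps)
    have g: "GG a r = R / b" "GG a p = P / b" "GG a q = Q / b"
      using r0 pq by (simp_all add: GG_pos R_def P_def Q_def b_def)
    have "J = D * L - (R/b - P/b) + (Q/b - R/b - D * (1 - L))"
      unfolding J_def e1 e2 g by simp
    also have "\<dots> = 2 * D * L - 2 * (R - P) / b" unfolding D_def using b by (simp add: field_simps)
    finally show ?thesis .
  qed
  have "L powr b * (Q-P) / b \<le> (R-P)/b" using K b by (intro divide_right_mono) auto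
  then have "(R - P) / b \<ge> L powr b * D" by (simp add: D_def)
  moreover have "2 * (R - P) / b = 2 * ((R - P) / b)" by simp
  ultimately have "J \<le> 2*D*L - 2*(L powr b * D)" using J2 by linarith
  also have "2*D*L - 2*(L powr b * D) = 2 * D * (L - L powr b)" by (simp add: algebra_simps)
  finally have "J \<le> 2 * D * (L - L powr b)" .
  also have "\<dots> \<le> 2 * D * (a * (a+1) powr (-(a+1)/a))" using Y D by simp
  finally have "J / D \<le> 2 * a * (a+1) powr (-(a+1)/a)" using D by (simp add: field_simps)
  then show ?thesis using rel GGd by (simp add: D_def)
qed


lemma Rplus_neg:
  fixes a p q :: real
  assumes a: "a < 0" "a > -1" and pq: "0 \<le> p" "p < q"
  shows "rel_osc (f_alpha a) p q \<le> 2 * (-a) * (a+1) powr (-(a+1)/a)"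
proof -
  define b where "b = a + 1"
  have b: "b > 0" "b < 1" using a by (simp_all add: b_def)
  define m where "m = mean_val (f_alpha a) p q"
  define P where "P = p powr b"
  define Q where "Q = q powr b"
  have PQ: "P < Q" unfolding P_def Q_def using pq b by (intro powr_less_mono2) auto
  have mGG: "m * (q - p) = GG a q - GG a p" unfolding m_def using mv_eq[of a p q] a pq by simp
  have GGd: "GG a q - GG a p = (Q - P) / b" using pq by (simp add: GG_pos P_def Q_def b_def diff_divide_distrib)
  have "m * (q - p) > 0" using mGG GGd PQ b by simp
  then have mpos: "m > 0" using pq by (simp add: zero_less_mult_iff)
  define r where "r = m powr (1/a)"
  have rm: "r powr a = m" using mpos a by (simp add: r_def powr_powr)
  have r0: "r > 0" using mpos by (simp add: r_def)
  have fx: "f_alpha a x = x powr a" if "x \<ge> 0" for x using that by (simp add: f_alpha_def)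
  have lo: "q powr a * (q - p) \<le> GG a q - GG a p"
  proof (rule lower_bd)
    fix x assume x: "x \<in> {p..q}" "x \<noteq> 0"
    have "q powr a \<le> x powr a" by (rule powr_mono2') (use x pq a in auto)
    then show "q powr a \<le> f_alpha a x" using fx[of x] x pq by simp
  qed (use a pq in auto)
  have "q powr a * (q-p) \<le> m * (q-p)" using lo mGG by simp
  then have "q powr a \<le> m" using pq by (meson diff_gt_0_iff_gt mult_right_le_imp_le)
  then have rq: "r \<le> q" unfolding r_def using a pq by (intro root_neg_le) auto
  have pr: "p \<le> r"
  proof (cases "p = 0")
    case True then show ?thesis using r0 by simp
  next
    case False
    then have p0: "p > 0" using pq by simp
    have hi: "GG a q - GG a p \<le> p powr a * (q - p)"
    proof (rule upper_bd)
      fix x assume x: "x \<in> {p..q}" "x \<noteq> 0"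
      have "x powr a \<le> p powr a" by (rule powr_mono2') (use x p0 a in auto)
      then show "f_alpha a x \<le> p powr a" using fx[of x] x pq by simp
    qed (use a pq in auto)
    have "m * (q-p) \<le> p powr a * (q-p)" using hi mGG by simp
    then have "m \<le> p powr a" using pq by (meson diff_gt_0_iff_gt mult_right_le_imp_le)
    then show ?thesis unfolding r_def using a p0 mpos by (intro root_neg_ge) auto
  qed
  have i1: "((\<lambda>x. \<bar>f_alpha a x - m\<bar>) has_integral (GG a r - GG a p - m*(r-p))) {p..r}"
  proof (rule int_abs_ge)
    fix x assume x: "x \<in> {p..r}" "x \<noteq> 0"
    have "r powr a \<le> x powr a" by (rule powr_mono2') (use x pq a in auto)
    then show "m \<le> f_alpha a x" using rm fx[of x] x pq by simp
  qed (use a pr in auto)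
  have i2: "((\<lambda>x. \<bar>f_alpha a x - m\<bar>) has_integral (m*(q-r) - (GG a q - GG a r))) {r..q}"
  proof (rule int_abs_le)
    fix x assume x: "x \<in> {r..q}"
    have "x powr a \<le> r powr a" by (rule powr_mono2') (use x r0 a in auto)
    then show "f_alpha a x \<le> m" using rm fx[of x] x r0 by simp
  qed (use a rq in auto)
  define J where "J = (GG a r - GG a p - m*(r-p)) + (m*(q-r) - (GG a q - GG a r))"
  have rel: "rel_osc (f_alpha a) p q = J / (GG a q - GG a p)"
    using a pq split_int[OF pr rq i1 i2] by (intro rel_osc_formula) (auto simp: m_def J_def)
  define L where "L = (r - p) / (q - p)"
  define R where "R = r powr b"
  have L0: "0 \<le> L" using pr pq by (simp add: L_def)
  have K: "L powr b * (Q - P) \<ge> R - P"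
    using K_ineq(2)[of a p r q] a pq pr rq by (simp add: L_def R_def P_def Q_def b_def)
  have Y: "L powr b - L \<le> - a * (a+1) powr (-(a+1)/a)"
    using Y2[OF a L0] by (simp add: b_def)
  define D where "D = (Q - P) / b"
  have D: "D > 0" using PQ b by (simp add: D_def)
  have mD: "m * (q - p) = D" using mGG GGd by (simp add: D_def)
  have J2: "J = 2 * ((R - P) / b) - 2 * D * L"
  proof -
    have e1: "m * (r - p) = D * L" unfolding L_def mD[symmetric] using pq by simp
    have e2: "m * (q - r) = D * (1 - L)" unfolding L_def mD[symmetric] using pq by (simp add: field_simps)
    have g: "GG a r = R / b" "GG a p = P / b" "GG a q = Q / b"
      using r0 pq by (simp_all add: GG_pos R_def P_def Q_def b_def)
    have "J = (R/b - P/b - D * L) + (D * (1 - L) - (Q/b - R/b))"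
      unfolding J_def e1 e2 g by simp
    also have "\<dots> = 2 * ((R - P) / b) - 2 * D * L" unfolding D_def using b by (simp add: field_simps)
    finally show ?thesis .
  qed
  have "(R-P)/b \<le> L powr b * (Q-P) / b" using K b by (intro divide_right_mono) auto
  then have "(R - P) / b \<le> L powr b * D" by (simp add: D_def)
  then have "J \<le> 2*(L powr b * D) - 2*D*L" using J2 by linarith
  also have "2*(L powr b * D) - 2*D*L = 2 * D * (L powr b - L)" by (simp add: algebra_simps)
  also have "\<dots> \<le> 2 * D * (- a * (a+1) powr (-(a+1)/a))" using mult_left_mono[OF Y, of "2*D"] D by simp
  finally have "J / D \<le> 2 * (-a) * (a+1) powr (-(a+1)/a)" using D by (simp add: field_simps)
  then show ?thesis using rel GGd by (simp add: D_def)
qed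



definition gfun :: "real \<Rightarrow> real \<Rightarrow> real" where
  "gfun a x = (a+1) * x powr a + a * x powr (a+1)"

lemma gfun_alt: "x > 0 \<Longrightarrow> gfun a x = x powr a * (1 + a * (x + 1))"
  unfolding gfun_def by (simp add: powr_add algebra_simps)

lemma eq_iff_gfun:
  assumes "x > 0"
  shows "x powr a = 1 / (1 + a * (x + 1)) \<longleftrightarrow> gfun a x = 1"
proof (cases "1 + a * (x + 1) = 0")
  case True then show ?thesis using assms by (simp add: gfun_alt)
next
  case False then show ?thesis using assms by (simp add: gfun_alt field_simps)
qed

lemma gfun_mono_pos:
  assumes "a > 0" "0 < x" "x < y"
  shows "gfun a x < gfun a y"
proof -
  have "x powr a < y powr a" "x powr (a+1) < y powr (a+1)"
    using assms by (auto intro!: powr_less_mono2)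
  then show ?thesis unfolding gfun_def using assms
    by (intro add_strict_mono mult_strict_left_mono) auto
qed

lemma gfun_mono_neg:
  assumes "a < 0" "a > -1" "0 < x" "x < y"
  shows "gfun a y < gfun a x"
proof -
  have "y powr a < x powr a" using assms by (intro powr_less_mono2_neg) auto
  moreover have "x powr (a+1) < y powr (a+1)"
    using assms by (intro powr_less_mono2) auto
  ultimately show ?thesis unfolding gfun_def using assms
    by (intro add_strict_mono mult_strict_left_mono mult_strict_left_mono_neg) auto
qed

lemma gfun_cont: "a > -1 \<Longrightarrow> a > 0 \<or> 0 < lo \<Longrightarrow> 0 \<le> lo \<Longrightarrow> continuous_on {lo..hi} (gfun a)"
  unfolding gfun_def
  by (intro continuous_intros continuous_on_powr') auto

lemma gfun_exists:
  assumes a: "a > -1" "a \<noteq> 0"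
  shows "\<exists>x. 0 < x \<and> x < 1 \<and> gfun a x = 1"
proof (cases "a > 0")
  case True
  have g0: "gfun a 0 = 0" by (simp add: gfun_def)
  have g1: "gfun a 1 = 1 + 2 * a" by (simp add: gfun_def)
  obtain x where x: "0 \<le> x" "x \<le> 1" "gfun a x = 1"
    using IVT'[of "gfun a" 0 1 1] g0 g1 True gfun_cont[of a 0 1] by auto
  then show ?thesis using g0 g1 True by (intro exI[of _ x]) (auto simp: le_less)
next
  case False
  then have an: "a < 0" using a by simp
  define x0 where "x0 = ((1-a)/(a+1)) powr (1/a)"
  have base: "(1-a)/(a+1) > 1" using a an by (simp add: field_simps)
  have x0p: "x0 > 0" using base unfolding x0_def by (intro powr_gt_zero[THEN iffD2]) auto
  have "x0 < 1 powr (1/a)" unfolding x0_def using base an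
    by (intro powr_less_mono2_neg) auto
  then have x01: "x0 < 1" by simp
  have x0a: "x0 powr a = (1-a)/(a+1)" using base an a by (simp add: x0_def powr_powr)
  have "x0 powr (a+1) \<le> 1 powr (a+1)" using x0p x01 a by (intro powr_mono2) auto
  then have "a * x0 powr (a+1) \<ge> a" using an by (simp add: mult_le_cancel_left_neg)
  then have gx0: "gfun a x0 \<ge> 1" unfolding gfun_def x0a using a by simp
  have g1: "gfun a 1 = 1 + 2 * a" by (simp add: gfun_def)
  obtain x where x: "x0 \<le> x" "x \<le> 1" "gfun a x = 1"
    using IVT2'[of "gfun a" 1 1 x0] gx0 g1 an x01 x0p gfun_cont[of a x0 1] a by auto
  then show ?thesis using g1 an x0p by (intro exI[of _ x]) (auto simp: le_less)
qed

lemma eta1_props: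
  assumes a: "a > -1" "a \<noteq> 0"
  shows "\<exists>!x. 0 < x \<and> x < 1 \<and> x powr a = 1 / (1 + a * (x + 1))"
    and "0 < eta1 a" "eta1 a < 1" "gfun a (eta1 a) = 1"
proof -
  obtain x where x: "0 < x" "x < 1" "gfun a x = 1" using gfun_exists[OF a] by blast
  have uniq: "y = x" if y: "0 < y" "y < 1" "gfun a y = 1" for y
  proof (rule ccontr)
    assume "y \<noteq> x"
    then have "y < x \<or> x < y" by auto
    then show False
    proof
      assume "y < x" then show False using gfun_mono_pos[of a y x] gfun_mono_neg[of a y x] a x y
        by (cases "a > 0") auto
    next
      assume "x < y" then show False using gfun_mono_pos[of a x y] gfun_mono_neg[of a x y] a x y
        by (cases "a > 0") auto
    qed
  qed
  show ex: "\<exists>!x. 0 < x \<and> x < 1 \<and> x powr a = 1 / (1 + a * (x + 1))"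
    using x uniq eq_iff_gfun by metis
  have "0 < eta1 a \<and> eta1 a < 1 \<and> eta1 a powr a = 1 / (1 + a * (eta1 a + 1))"
    unfolding eta1_def by (rule theI'[OF ex])
  then show "0 < eta1 a" "eta1 a < 1" "gfun a (eta1 a) = 1" using eq_iff_gfun by auto
qed



lemma cmp_small: "a > 0 \<Longrightarrow> \<bar>x\<bar> \<le> r \<Longrightarrow> f_alpha a x \<le> r powr a"
  unfolding f_alpha_def by (intro powr_mono2) auto
lemma cmp_big: "a > 0 \<Longrightarrow> 0 \<le> r \<Longrightarrow> r \<le> \<bar>x\<bar> \<Longrightarrow> r powr a \<le> f_alpha a x"
  unfolding f_alpha_def by (intro powr_mono2) auto
lemma cmp_small_neg: "a < 0 \<Longrightarrow> x \<noteq> 0 \<Longrightarrow> \<bar>x\<bar> \<le> r \<Longrightarrow> r powr a \<le> f_alpha a x"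
  unfolding f_alpha_def by (intro powr_mono2') auto
lemma cmp_big_neg: "a < 0 \<Longrightarrow> 0 < r \<Longrightarrow> r \<le> \<bar>x\<bar> \<Longrightarrow> f_alpha a x \<le> r powr a"
  unfolding f_alpha_def by (intro powr_mono2') auto

lemma split3:
  fixes g :: "real \<Rightarrow> real"
  assumes "u \<le> v" "v \<le> w" "w \<le> z"
    and "(g has_integral I1) {u..v}" "(g has_integral I2) {v..w}" "(g has_integral I3) {w..z}"
  shows "integral {u..z} g = I1 + I2 + I3"
proof -
  have "(g has_integral I2 + I3) {v..z}" using has_integral_combine assms by blast
  then have "(g has_integral I1 + (I2 + I3)) {u..z}" using has_integral_combine assms by (meson order_trans)
  then show ?thesis by (simp add: integral_unique add.assoc)
qed

lemma m_gfun:
  assumes "e > 0" "a + 1 > 0"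
  shows "(1 + e powr (a+1)) / ((a+1) * (1 + e)) - e powr a = (1 - gfun a e) / ((a+1) * (1 + e))"
proof -
  have E: "e powr (a+1) = e * e powr a" using assms by (simp add: powr_add)
  define D where "D = (a+1) * (1 + e)"
  have D: "D \<noteq> 0" using assms by (simp add: D_def)
  have "(1 + e * e powr a) / D - e powr a = (1 + e * e powr a - e powr a * D) / D"
    using D by (simp add: diff_divide_distrib)
  also have "1 + e * e powr a - e powr a * D = 1 - ((a+1) * e powr a + a * (e * e powr a))"
    by (simp add: D_def algebra_simps)
  finally show ?thesis unfolding gfun_def E D_def[symmetric] .
qed


lemma algA_pos:
  fixes a b m e r E c :: real
  assumes "a = b - 1" "a > 0" "b > 0" "m > 0" "c > 0" "e = c - 1" "E = m*b*c - 1"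
  shows "(m*(r-(-e)) - (r*m/b - (-(E/b))) + (1/b - r*m/b - m*(1-r)))/(m*c)
     = 2*\<bar>a\<bar>*r/(b*c) + 2*\<bar>a\<bar>/a*(1/(1+E) - 1/c)"
proof -
  have E1: "1 + E = m*b*c" using assms by simp
  have s: "2*\<bar>a\<bar>/a = 2" using assms(2) by simp
  have "\<bar>a\<bar> = a" using assms by simp
  then show ?thesis unfolding E1 s unfolding \<open>\<bar>a\<bar> = _\<close> unfolding assms(1,6,7) using assms(3,4,5) by (simp add: field_simps)
qed
lemma algB_pos:
  fixes a b m e r E c :: real
  assumes "a = b - 1" "a > 0" "b > 0" "m > 0" "c > 0" "e = c - 1" "E = m*b*c - 1"
  shows "((-(r*m/b) - (-(E/b)) - m*(-r-(-e))) + (m*(r-(-r)) - (r*m/b - (-(r*m/b)))) + (1/b - r*m/b - m*(1-r)))/(m*c)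
     = 4*\<bar>a\<bar>*r/(b*c)"
proof -
  have "\<bar>a\<bar> = a" using assms by simp
  then show ?thesis unfolding \<open>\<bar>a\<bar> = _\<close> unfolding assms(1,6,7) using assms(3,4,5) by (simp add: field_simps)
qed
lemma algA_neg:
  fixes a b m e r E c :: real
  assumes "a = b - 1" "a < 0" "b > 0" "m > 0" "c > 0" "e = c - 1" "E = m*b*c - 1"
  shows "((r*m/b - (-(E/b)) - m*(r-(-e))) + (m*(1-r) - (1/b - r*m/b)))/(m*c)
     = 2*\<bar>a\<bar>*r/(b*c) + 2*\<bar>a\<bar>/a*(1/(1+E) - 1/c)"
proof -
  have E1: "1 + E = m*b*c" using assms by simp
  have s: "2*\<bar>a\<bar>/a = -2" using assms(2) by simp
  have "\<bar>a\<bar> = -a" using assms by simp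
  then show ?thesis unfolding E1 s unfolding \<open>\<bar>a\<bar> = _\<close> unfolding assms(1,6,7) using assms(3,4,5) by (simp add: field_simps)
qed
lemma algB_neg:
  fixes a b m e r E c :: real
  assumes "a = b - 1" "a < 0" "b > 0" "m > 0" "c > 0" "e = c - 1" "E = m*b*c - 1"
  shows "((m*(-r-(-e)) - (-(r*m/b) - (-(E/b)))) + (r*m/b - (-(r*m/b)) - m*(r-(-r))) + (m*(1-r) - (1/b - r*m/b)))/(m*c)
     = 4*\<bar>a\<bar>*r/(b*c)"
proof -
  have "\<bar>a\<bar> = -a" using assms by simp
  then show ?thesis unfolding \<open>\<bar>a\<bar> = _\<close> unfolding assms(1,6,7) using assms(3,4,5) by (simp add: field_simps)
qed

lemma Rfull:
  fixes a e :: real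
  assumes a: "a > -1" "a \<noteq> 0" and e: "0 \<le> e" "e \<le> 1"
  shows "rel_osc (f_alpha a) (-e) 1 = 2 * \<bar>a\<bar> * (a+1) powr (-(a+1)/a) * psi a e"
proof -
  define b where "b = a+1"
  have b: "b > 0" using a by (simp add: b_def)
  define E where "E = e powr b"
  have E0: "E \<ge> 0" by (simp add: E_def)
  have pq: "-e < 1" using e by simp
  define m where "m = mean_val (f_alpha a) (-e) 1"
  have GG1: "GG a 1 = 1/b" by (simp add: GG_pos b_def)
  have GGe: "GG a (-e) = -(E/b)" using e by (simp add: GG_odd GG_pos E_def b_def)
  have mdef: "m = (1 + E)/(b*(1+e))"
    unfolding m_def mv_eq[OF a(1) pq] GG1 GGe using b e by (simp add: field_simps)
  have mpos: "m > 0" using b e E0 by (simp add: mdef)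
  have bd: "b*(1+e) > 0" using b e by simp
  have mbe: "m * (b*(1+e)) = 1 + E" using b e unfolding mdef by simp
  then have Em: "E = m*b*(1+e) - 1" by (simp add: algebra_simps)
  define r where "r = m powr (1/a)"
  have rm: "r powr a = m" using mpos a by (simp add: r_def powr_powr)
  have r0: "r > 0" using mpos by (simp add: r_def)
  have GGr: "GG a r = r * m / b" "GG a (-r) = - (r * m / b)"
    using r0 rm by (simp_all add: GG_odd GG_pos b_def powr_add)
  have rel_gen: "rel_osc (f_alpha a) (-e) 1 = J / (m*(1+e))"
    if "integral {-e..1} (\<lambda>x. \<bar>f_alpha a x - m\<bar>) = J" for J
  proof -
    have "GG a 1 - GG a (-e) = (1 + E) / b" unfolding GG1 GGe by (simp add: add_divide_distrib)
    also have "\<dots> = m * (1+e)" unfolding mbe[symmetric] using b by simp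
    finally show ?thesis using rel_osc_formula[OF a(1) pq, of J] that unfolding m_def by simp
  qed
  have r1: "r \<le> 1"
  proof (cases "a > 0")
    case True
    have "E \<le> e"
    proof (cases "e = 0")
      case False
      then have "e powr a \<le> 1" using e True by (intro powr_le1) auto
      moreover have "E = e * e powr a" using False e by (simp add: E_def b_def powr_add)
      ultimately show ?thesis using e by (simp add: mult_left_le)
    qed (simp add: E_def)
    moreover have "0 \<le> a * (1 + e)" using True e by simp
    ultimately have "1 + E \<le> b * (1 + e)" by (simp add: b_def algebra_simps)
    then have "m \<le> 1" using bd by (simp add: mdef)
    then show ?thesis unfolding r_def using True mpos by (intro root_pos_ge) auto
  next
    case False
    then have an: "a < 0" using a by simp
    have "E \<ge> e"
    proof (cases "e = 0")
      case False
      then have "1 powr a \<le> e powr a" using e an by (intro powr_mono2') auto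
      moreover have "E = e * e powr a" using False e by (simp add: E_def b_def powr_add)
      ultimately show ?thesis using e by (simp add: mult_le_cancel_left1)
    qed (simp add: E_def)
    moreover have "a * (1 + e) \<le> 0" using an e by (simp add: mult_nonpos_nonneg)
    ultimately have "b * (1 + e) \<le> 1 + E" by (simp add: b_def algebra_simps)
    then have "m \<ge> 1" using bd by (simp add: mdef)
    then show ?thesis unfolding r_def using an mpos by (intro root_neg_le) auto
  qed
  define N where "N = 2 * \<bar>a\<bar> * (a+1) powr (-(a+1)/a)"
  have PA: "(1 + e powr (a+1)) powr (1/a) / (1+e) powr ((a+1)/a) = r * b powr (1/a) / (1+e)"
  proof -
    have "(1 + E) powr (1/a) = (m * (b * (1+e))) powr (1/a)" using mbe by simp
    also have "\<dots> = r * (b powr (1/a) * (1+e) powr (1/a))"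
      using mpos b e by (simp add: powr_mult r_def)
    finally have h1: "(1 + E) powr (1/a) = r * b powr (1/a) * (1+e) powr (1/a)" by simp
    have "b/a = 1/a + 1" using a by (simp add: b_def field_simps)
    then have h2: "(1+e) powr (b/a) = (1+e) powr (1/a) * (1+e)"
      using e by (simp add: powr_add)
    have hp: "(1+e) powr (1/a) > 0" using e by simp
    have gen: "\<And>P B. P > 0 \<Longrightarrow> (r * B * P) / (P * (1+e)) = r * B / (1+e)" using e by simp
    show ?thesis unfolding b_def[symmetric] E_def[symmetric] unfolding h1 h2 using gen[OF hp] .
  qed
  have Nb: "N = 2 * \<bar>a\<bar> * b powr (-b/a)" unfolding N_def b_def by simp
  have NA: "N * (r * b powr (1/a) / (1+e)) = 2 * \<bar>a\<bar> * r / (b * (1+e))"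
  proof -
    have ex: "-b/a + 1/a = -1" using a by (simp add: b_def field_simps)
    have "b powr (-b/a) * b powr (1/a) = b powr (-b/a + 1/a)" by (rule powr_add[symmetric])
    also have "\<dots> = b powr (-1)" unfolding ex ..
    also have "\<dots> = 1 / b" using b by (simp add: powr_minus divide_inverse)
    finally have k: "b powr (-b/a) * b powr (1/a) = 1 / b" .
    have "N * (r * b powr (1/a) / (1+e)) = 2 * \<bar>a\<bar> * r * (b powr (-b/a) * b powr (1/a)) / (1+e)"
      unfolding Nb by (simp add: mult_ac)
    also have "\<dots> = 2 * \<bar>a\<bar> * r / (b * (1+e))" unfolding k by simp
    finally show ?thesis .
  qed
  have NC: "N * ((a+1) powr ((a+1)/a) / a) = 2 * \<bar>a\<bar> / a"
  proof -
    have ex: "-b/a + b/a = 0" by (simp add: field_simps)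
    have "b powr (-b/a) * b powr (b/a) = b powr (-b/a + b/a)" by (rule powr_add[symmetric])
    also have "\<dots> = 1" unfolding ex using b by simp
    finally have k: "b powr (-b/a) * b powr (b/a) = 1" .
    have "N * ((a+1) powr ((a+1)/a) / a) = 2 * \<bar>a\<bar> * (b powr (-b/a) * b powr (b/a)) / a"
      unfolding Nb b_def by (simp add: mult_ac)
    also have "\<dots> = 2 * \<bar>a\<bar> / a" unfolding k by simp
    finally show ?thesis .
  qed
  have psiA: "N * psi a e = 2 * \<bar>a\<bar> * r / (b * (1+e)) + 2 * \<bar>a\<bar> / a * (1 / (1 + E) - 1 / (1 + e))"
    if "e \<le> eta1 a"
  proof -
    have "N * psi a e = N * (r * b powr (1/a) / (1+e)) + N * ((a+1) powr ((a+1)/a) / a) * (1 / (1 + E) - 1 / (1 + e))"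
      unfolding psi_def using that PA by (simp add: E_def b_def algebra_simps)
    then show ?thesis unfolding NA NC .
  qed
  have psiB: "N * psi a e = 4 * \<bar>a\<bar> * r / (b * (1+e))"
    if "\<not> e \<le> eta1 a"
  proof -
    have "psi a e = 2 * ((1 + e powr (a+1)) powr (1/a) / (1+e) powr ((a+1)/a))"
      unfolding psi_def using that by simp
    then have "psi a e = 2 * (r * b powr (1/a) / (1+e))" unfolding PA .
    then have "N * psi a e = 2 * (N * (r * b powr (1/a) / (1+e)))" by simp
    then show ?thesis unfolding NA by simp
  qed
  have mgf: "m - e powr a = (1 - gfun a e) / (b * (1 + e))" if "e > 0"
    using m_gfun[OF that, of a] a unfolding mdef E_def b_def by simp
  have brA: "e \<le> r" if "e \<le> eta1 a"
  proof (cases "e = 0")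
    case True then show ?thesis using r0 by simp
  next
    case False
    then have ep: "e > 0" using e by simp
    show ?thesis
    proof (cases "a > 0")
      case True
      have "gfun a e \<le> 1"
        using that gfun_mono_pos[OF True ep, of "eta1 a"] eta1_props[OF a] by (cases "e = eta1 a") auto
      then have "m - e powr a \<ge> 0" unfolding mgf[OF ep] using bd by simp
      then show ?thesis unfolding r_def using True e by (intro root_pos_le) auto
    next
      case False
      then have an: "a < 0" using a by simp
      have "gfun a e \<ge> 1"
        using that gfun_mono_neg[OF an a(1) ep, of "eta1 a"] eta1_props[OF a] by (cases "e = eta1 a") auto
      then have "m - e powr a \<le> 0" unfolding mgf[OF ep] using bd by (simp add: divide_nonpos_pos)
      then show ?thesis unfolding r_def using an ep mpos by (intro root_neg_ge) auto
    qed
  qed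
  have brB: "r \<le> e" if "\<not> e \<le> eta1 a"
  proof -
    have ep: "e > 0" using that eta1_props[OF a] by simp
    show ?thesis
    proof (cases "a > 0")
      case True
      have "gfun a e > 1"
        using that gfun_mono_pos[OF True _, of "eta1 a" e] eta1_props[OF a] by auto
      then have "m - e powr a \<le> 0" unfolding mgf[OF ep] using bd by (simp add: divide_nonpos_pos)
      then show ?thesis unfolding r_def using True e mpos by (intro root_pos_ge) auto
    next
      case False
      then have an: "a < 0" using a by simp
      have "gfun a e < 1"
        using that gfun_mono_neg[OF an a(1) _, of "eta1 a" e] eta1_props[OF a] by auto
      then have "m - e powr a \<ge> 0" unfolding mgf[OF ep] using bd by simp
      then show ?thesis unfolding r_def using an ep by (intro root_neg_le) auto
    qed
  qed
  have c1: "1 + e > 0" using e by simp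
  have eq: "e = (1 + e) - 1" by simp
  show ?thesis
  proof (cases "a > 0")
    case ap: True
    show ?thesis
    proof (cases "e \<le> eta1 a")
      case True
      have er: "e \<le> r" by (rule brA[OF True])
      have i1: "((\<lambda>x. \<bar>f_alpha a x - m\<bar>) has_integral (m*(r-(-e)) - (GG a r - GG a (-e)))) {-e..r}"
      proof (rule int_abs_le)
        fix x assume x: "x \<in> {-e..r}"
        have "f_alpha a x \<le> r powr a" by (rule cmp_small) (use ap x er in auto)
        then show "f_alpha a x \<le> m" using rm by simp
      qed (use a er e in auto)
      have i2: "((\<lambda>x. \<bar>f_alpha a x - m\<bar>) has_integral (GG a 1 - GG a r - m*(1-r))) {r..1}"
      proof (rule int_abs_ge)
        fix x assume x: "x \<in> {r..1}"
        have "r powr a \<le> f_alpha a x" by (rule cmp_big) (use ap x r0 in auto)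
        then show "m \<le> f_alpha a x" using rm by simp
      qed (use a r1 in auto)
      have "rel_osc (f_alpha a) (-e) 1 = (m*(r-(-e)) - (GG a r - GG a (-e)) + (GG a 1 - GG a r - m*(1-r))) / (m*(1+e))"
        using rel_gen split_int[of "-e" r 1, OF _ r1 i1 i2] er e by auto
      also have "\<dots> = 2 * \<bar>a\<bar> * r / (b * (1+e)) + 2 * \<bar>a\<bar> / a * (1 / (1 + E) - 1 / (1 + e))"
        unfolding GGr GG1 GGe by (rule algA_pos[OF _ ap b mpos c1 eq Em]) (simp add: b_def)
      also have "\<dots> = N * psi a e" using psiA[OF True] by simp
      finally show ?thesis unfolding N_def .
    next
      case False
      have re: "r \<le> e" by (rule brB[OF False])
      have i1: "((\<lambda>x. \<bar>f_alpha a x - m\<bar>) has_integral (GG a (-r) - GG a (-e) - m*(-r-(-e)))) {-e..-r}"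
      proof (rule int_abs_ge)
        fix x assume x: "x \<in> {-e..-r}"
        have "r powr a \<le> f_alpha a x" by (rule cmp_big) (use ap x r0 in auto)
        then show "m \<le> f_alpha a x" using rm by simp
      qed (use a r0 re in auto)
      have i2: "((\<lambda>x. \<bar>f_alpha a x - m\<bar>) has_integral (m*(r-(-r)) - (GG a r - GG a (-r)))) {-r..r}"
      proof (rule int_abs_le)
        fix x assume x: "x \<in> {-r..r}"
        have "f_alpha a x \<le> r powr a" by (rule cmp_small) (use ap x in auto)
        then show "f_alpha a x \<le> m" using rm by simp
      qed (use a r0 in auto)
      have i3: "((\<lambda>x. \<bar>f_alpha a x - m\<bar>) has_integral (GG a 1 - GG a r - m*(1-r))) {r..1}"
      proof (rule int_abs_ge)
        fix x assume x: "x \<in> {r..1}"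
        have "r powr a \<le> f_alpha a x" by (rule cmp_big) (use ap x r0 in auto)
        then show "m \<le> f_alpha a x" using rm by simp
      qed (use a r1 in auto)
      have "rel_osc (f_alpha a) (-e) 1 = ((GG a (-r) - GG a (-e) - m*(-r-(-e))) + (m*(r-(-r)) - (GG a r - GG a (-r))) + (GG a 1 - GG a r - m*(1-r))) / (m*(1+e))"
        using rel_gen split3[of "-e" "-r" r 1, OF _ _ r1 i1 i2 i3] re r0 by auto
      also have "\<dots> = 4 * \<bar>a\<bar> * r / (b * (1+e))"
        unfolding GGr GG1 GGe by (rule algB_pos[OF _ ap b mpos c1 eq Em]) (simp add: b_def)
      also have "\<dots> = N * psi a e" using psiB[OF False] by simp
      finally show ?thesis unfolding N_def .
    qed
  next
    case False
    then have an: "a < 0" using a by simp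
    show ?thesis
    proof (cases "e \<le> eta1 a")
      case True
      have er: "e \<le> r" by (rule brA[OF True])
      have i1: "((\<lambda>x. \<bar>f_alpha a x - m\<bar>) has_integral (GG a r - GG a (-e) - m*(r-(-e)))) {-e..r}"
      proof (rule int_abs_ge)
        fix x assume x: "x \<in> {-e..r}" "x \<noteq> 0"
        have "r powr a \<le> f_alpha a x" by (rule cmp_small_neg) (use an x er in auto)
        then show "m \<le> f_alpha a x" using rm by simp
      qed (use a er e in auto)
      have i2: "((\<lambda>x. \<bar>f_alpha a x - m\<bar>) has_integral (m*(1-r) - (GG a 1 - GG a r))) {r..1}"
      proof (rule int_abs_le)
        fix x assume x: "x \<in> {r..1}"
        have "f_alpha a x \<le> r powr a" by (rule cmp_big_neg) (use an x r0 in auto)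
        then show "f_alpha a x \<le> m" using rm by simp
      qed (use a r1 in auto)
      have "rel_osc (f_alpha a) (-e) 1 = ((GG a r - GG a (-e) - m*(r-(-e))) + (m*(1-r) - (GG a 1 - GG a r))) / (m*(1+e))"
        using rel_gen split_int[of "-e" r 1, OF _ r1 i1 i2] er e by auto
      also have "\<dots> = 2 * \<bar>a\<bar> * r / (b * (1+e)) + 2 * \<bar>a\<bar> / a * (1 / (1 + E) - 1 / (1 + e))"
        unfolding GGr GG1 GGe by (rule algA_neg[OF _ an b mpos c1 eq Em]) (simp add: b_def)
      also have "\<dots> = N * psi a e" using psiA[OF True] by simp
      finally show ?thesis unfolding N_def .
    next
      case False
      have re: "r \<le> e" by (rule brB[OF False])
      have i1: "((\<lambda>x. \<bar>f_alpha a x - m\<bar>) has_integral (m*(-r-(-e)) - (GG a (-r) - GG a (-e)))) {-e..-r}"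
      proof (rule int_abs_le)
        fix x assume x: "x \<in> {-e..-r}"
        have "f_alpha a x \<le> r powr a" by (rule cmp_big_neg) (use an x r0 in auto)
        then show "f_alpha a x \<le> m" using rm by simp
      qed (use a r0 re in auto)
      have i2: "((\<lambda>x. \<bar>f_alpha a x - m\<bar>) has_integral (GG a r - GG a (-r) - m*(r-(-r)))) {-r..r}"
      proof (rule int_abs_ge)
        fix x assume x: "x \<in> {-r..r}" "x \<noteq> 0"
        have "r powr a \<le> f_alpha a x" by (rule cmp_small_neg) (use an x in auto)
        then show "m \<le> f_alpha a x" using rm by simp
      qed (use a r0 in auto)
      have i3: "((\<lambda>x. \<bar>f_alpha a x - m\<bar>) has_integral (m*(1-r) - (GG a 1 - GG a r))) {r..1}"
      proof (rule int_abs_le)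
        fix x assume x: "x \<in> {r..1}"
        have "f_alpha a x \<le> r powr a" by (rule cmp_big_neg) (use an x r0 in auto)
        then show "f_alpha a x \<le> m" using rm by simp
      qed (use a r1 in auto)
      have "rel_osc (f_alpha a) (-e) 1 = ((m*(-r-(-e)) - (GG a (-r) - GG a (-e))) + (GG a r - GG a (-r) - m*(r-(-r))) + (m*(1-r) - (GG a 1 - GG a r))) / (m*(1+e))"
        using rel_gen split3[of "-e" "-r" r 1, OF _ _ r1 i1 i2 i3] re r0 by auto
      also have "\<dots> = 4 * \<bar>a\<bar> * r / (b * (1+e))"
        unfolding GGr GG1 GGe by (rule algB_neg[OF _ an b mpos c1 eq Em]) (simp add: b_def)
      also have "\<dots> = N * psi a e" using psiB[OF False] by simp
      finally show ?thesis unfolding N_def .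
    qed
  qed
qed



lemma rel_le2:
  assumes a: "a > -1" and pq: "p < q" and mp: "mean_val (f_alpha a) p q > 0"
  shows "rel_osc (f_alpha a) p q \<le> 2"
proof -
  let ?m = "mean_val (f_alpha a) p q"
  have i1: "(\<lambda>x. \<bar>f_alpha a x - ?m\<bar>) integrable_on {p..q}" by (rule osc_int[OF a pq])
  have i2: "((\<lambda>x. f_alpha a x + ?m) has_integral (GG a q - GG a p) + ?m * (q - p)) {p..q}"
    using has_integral_add[OF int_fa[OF a] has_integral_const_real[of ?m p q]] pq by (simp add: mult.commute)
  have "integral {p..q} (\<lambda>x. \<bar>f_alpha a x - ?m\<bar>) \<le> (GG a q - GG a p) + ?m * (q - p)"
  proof (rule has_integral_le[OF integrable_integral[OF i1] i2])
    fix x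
    have "0 \<le> f_alpha a x" by (rule fa_nonneg)
    then show "\<bar>f_alpha a x - ?m\<bar> \<le> f_alpha a x + ?m" using mp by (simp add: abs_le_iff)
  qed
  also have "GG a q - GG a p = ?m * (q - p)" using mv_eq[OF a pq] pq by simp
  finally have "integral {p..q} (\<lambda>x. \<bar>f_alpha a x - ?m\<bar>) \<le> (2 * ?m) * (q - p)" by (simp add: mult_ac)
  then have "mean_osc (f_alpha a) p q \<le> 2 * ?m"
    unfolding mo_eq[OF a pq] using pq by (simp add: divide_le_eq)
  then have "mean_osc (f_alpha a) p q / ?m \<le> 2" using mp by (simp add: divide_le_eq)
  then show ?thesis unfolding rel_osc_def .
qed

lemma psi0: "a > -1 \<Longrightarrow> a \<noteq> 0 \<Longrightarrow> psi a 0 = 1"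
proof -
  assume "a > -1" "a \<noteq> 0"
  then have "0 < eta1 a" by (rule eta1_props(2))
  then have le: "0 \<le> eta1 a" by simp
  have z: "(0::real) powr (a+1) = 0" by simp
  show ?thesis unfolding psi_def if_P[OF le] z by simp
qed

lemma case_mixed:
  assumes a: "a > -1" "a \<noteq> 0" and pq: "p < 0" "0 < q"
  shows "\<exists>e. 0 \<le> e \<and> e \<le> 1 \<and> rel_osc (f_alpha a) p q = rel_osc (f_alpha a) (-e) 1"
proof (cases "-p \<le> q")
  case True
  have F: "rel_osc (f_alpha a) (p/q) (q/q) = rel_osc (f_alpha a) p q"
    using rel_osc_scale[OF a(1), of p q q] pq by linarith
  have e1: "p/q = -(-p/q)" by simp
  have e2: "q/q = 1" using pq by simp
  have r: "rel_osc (f_alpha a) (-(-p/q)) 1 = rel_osc (f_alpha a) (p/q) (q/q)"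
    using e1 e2 by (intro arg_cong2[where f="rel_osc (f_alpha a)"]) auto
  have h0: "0 \<le> -p/q" using pq by (intro divide_nonneg_pos) auto
  have h1: "-p/q \<le> 1" using True pq by (subst divide_le_eq_1_pos) auto
  show ?thesis
    by (intro exI[of _ "-p/q"] conjI h0 h1) (simp only: r F)
next
  case False
  have F0: "rel_osc (f_alpha a) (-q) (-p) = rel_osc (f_alpha a) p q"
    using rel_osc_reflect[OF a(1), of p q] pq by linarith
  have F: "rel_osc (f_alpha a) ((-q)/(-p)) ((-p)/(-p)) = rel_osc (f_alpha a) (-q) (-p)"
    using rel_osc_scale[OF a(1), of "-q" "-p" "-p"] pq by linarith
  have e1: "(-q)/(-p) = -(q/(-p))" by simp
  have e2: "(-p)/(-p) = 1" using pq by simp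
  have r: "rel_osc (f_alpha a) (-(q/(-p))) 1 = rel_osc (f_alpha a) ((-q)/(-p)) ((-p)/(-p))"
    using e1 e2 by (intro arg_cong2[where f="rel_osc (f_alpha a)"]) auto
  have h0: "0 \<le> q/(-p)" using pq by (intro divide_nonneg_pos) auto
  have h1: "q/(-p) \<le> 1" using False pq by (subst divide_le_eq_1_pos) auto
  show ?thesis
    by (intro exI[of _ "q/(-p)"] conjI h0 h1) (simp only: r F F0)
qed


theorem theorem2p1:
  fixes \<alpha> :: real
  assumes "\<alpha> > -1" and "\<alpha> \<noteq> 0"
  shows "(\<exists>!\<eta>. 0 < \<eta> \<and> \<eta> < 1 \<and> \<eta> powr \<alpha> = 1 / (1 + \<alpha> * (\<eta> + 1)))
         \<and> GR_norm (f_alpha \<alpha>) UNIV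
             = GR_norm (f_alpha \<alpha>) {0..} * (SUP \<eta> \<in> {0..1}. psi \<alpha> \<eta>)"
proof
  show "\<exists>!\<eta>. 0 < \<eta> \<and> \<eta> < 1 \<and> \<eta> powr \<alpha> = 1 / (1 + \<alpha> * (\<eta> + 1))"
    by (rule eta1_props(1)[OF assms])
next
  note a = assms
  let ?g = "\<lambda>ab. rel_osc (f_alpha \<alpha>) (fst ab) (snd ab)"
  define N where "N = 2 * \<bar>\<alpha>\<bar> * (\<alpha>+1) powr (-(\<alpha>+1)/\<alpha>)"
  have Npos: "N > 0" using a by (simp add: N_def)
  have Rp: "rel_osc (f_alpha \<alpha>) p q \<le> N" if "0 \<le> p" "p < q" for p q
  proof (cases "\<alpha> > 0")
    case True then show ?thesis using Rplus_pos[OF True that] by (simp add: N_def)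
  next
    case False
    then have "\<alpha> < 0" using a by simp
    then show ?thesis using Rplus_neg[OF _ a(1) that] by (simp add: N_def)
  qed
  have psiR: "N * psi \<alpha> e = rel_osc (f_alpha \<alpha>) (-e) 1" if "0 \<le> e" "e \<le> 1" for e
    using Rfull[OF a that] by (simp add: N_def)
  have R01: "rel_osc (f_alpha \<alpha>) 0 1 = N" using psiR[of 0] psi0[OF a] by simp
  have GR0: "GR_norm (f_alpha \<alpha>) {0..} = N"
  proof -
    let ?S = "{(a, b). a < b \<and> {a..b} \<subseteq> {0::real..}}"
    have mem: "(0, 1) \<in> ?S" by auto
    have le: "?g ab \<le> N" if "ab \<in> ?S" for ab
    proof -
      have "0 \<le> fst ab" "fst ab < snd ab" using that by auto
      then show ?thesis using Rp by auto
    qed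
    have "(SUP ab \<in> ?S. ?g ab) = N"
    proof (rule antisym)
      show "(SUP ab \<in> ?S. ?g ab) \<le> N"
        by (rule cSUP_least) (use mem in blast, use le in blast)
      have "bdd_above (?g ` ?S)" using le by (intro bdd_aboveI2) auto
      then have "?g (0, 1) \<le> (SUP ab \<in> ?S. ?g ab)" using mem by (intro cSUP_upper) auto
      then show "N \<le> (SUP ab \<in> ?S. ?g ab)" using R01 by simp
    qed
    then show ?thesis unfolding GR_norm_def .
  qed
  have mvpos: "mean_val (f_alpha \<alpha>) (-e) 1 > 0" if "0 \<le> e" "e \<le> 1" for e
  proof -
    have "GG \<alpha> 1 > 0" using a by (simp add: GG_pos)
    moreover have "GG \<alpha> (-e) \<le> 0" using that a by (simp add: GG_odd GG_pos)
    ultimately show ?thesis using mv_eq[OF a(1), of "-e" 1] that by simp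
  qed
  have bddpsi: "bdd_above (psi \<alpha> ` {0..1})"
  proof (rule bdd_aboveI2)
    fix e :: real assume e: "e \<in> {0..1}"
    have "N * psi \<alpha> e \<le> 2" using psiR[of e] rel_le2[OF a(1) _ mvpos] e by auto
    then show "psi \<alpha> e \<le> 2 / N" using Npos by (simp add: field_simps)
  qed
  define Psi where "Psi = (SUP \<eta> \<in> {0..1}. psi \<alpha> \<eta>)"
  have psiPsi: "psi \<alpha> e \<le> Psi" if "e \<in> {0..1}" for e
    unfolding Psi_def using bddpsi that by (intro cSUP_upper)
  have key: "\<exists>e\<in>{0..1}. rel_osc (f_alpha \<alpha>) p q \<le> N * psi \<alpha> e" if "p < q" for p q
  proof (cases "0 \<le> p")
    case True then show ?thesis using Rp[OF True that] psi0[OF a] by (intro bexI[of _ 0]) auto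
  next
    case False
    show ?thesis
    proof (cases "q \<le> 0")
      case True
      have "rel_osc (f_alpha \<alpha>) p q = rel_osc (f_alpha \<alpha>) (-q) (-p)"
        using rel_osc_reflect[OF a(1) that] by simp
      also have "\<dots> \<le> N" using Rp[of "-q" "-p"] True that by simp
      finally show ?thesis using psi0[OF a] by (intro bexI[of _ 0]) auto
    next
      case False2: False
      obtain e where e: "0 \<le> e" "e \<le> 1" "rel_osc (f_alpha \<alpha>) p q = rel_osc (f_alpha \<alpha>) (-e) 1"
        using case_mixed[OF a, of p q] False False2 by auto
      then show ?thesis using psiR[OF e(1,2)] by (intro bexI[of _ e]) auto
    qed
  qed
  have upper: "rel_osc (f_alpha \<alpha>) p q \<le> N * Psi" if pq: "p < q" for p q
  proof -
    obtain e where e: "e \<in> {0..1}" "rel_osc (f_alpha \<alpha>) p q \<le> N * psi \<alpha> e" using key[OF pq] by blast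
    have "N * psi \<alpha> e \<le> N * Psi" using psiPsi[OF e(1)] Npos by simp
    then show ?thesis using e(2) by simp
  qed
  let ?S = "{(a, b). a < b \<and> {a..b} \<subseteq> (UNIV::real set)}"
  have memS: "(-e, 1) \<in> ?S" if "0 \<le> e" "e \<le> 1" for e using that by auto
  have leS: "?g ab \<le> N * Psi" if "ab \<in> ?S" for ab using that upper by auto
  have bddS: "bdd_above (?g ` ?S)" using leS by (intro bdd_aboveI2) auto
  have "(SUP ab \<in> ?S. ?g ab) = N * Psi"
  proof (rule antisym)
    show "(SUP ab \<in> ?S. ?g ab) \<le> N * Psi"
    proof (rule cSUP_least)
      have "(0, 1) \<in> ?S" by simp
      then show "?S \<noteq> {}" by blast
    qed (rule leS)
    have "Psi \<le> (SUP ab \<in> ?S. ?g ab) / N"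
      unfolding Psi_def
    proof (rule cSUP_least)
      fix e :: real assume e: "e \<in> {0..1}"
      have m: "(-e, 1) \<in> ?S" using e by (intro memS) auto
      have "?g (-e, 1) \<le> (SUP ab \<in> ?S. ?g ab)" by (rule cSUP_upper[OF m bddS])
      then have "N * psi \<alpha> e \<le> (SUP ab \<in> ?S. ?g ab)" using psiR[of e] e by simp
      then show "psi \<alpha> e \<le> (SUP ab \<in> ?S. ?g ab) / N" using Npos by (simp add: field_simps)
    qed simp
    then show "N * Psi \<le> (SUP ab \<in> ?S. ?g ab)" using Npos by (simp add: field_simps)
  qed
  then show "GR_norm (f_alpha \<alpha>) UNIV = GR_norm (f_alpha \<alpha>) {0..} * (SUP \<eta> \<in> {0..1}. psi \<alpha> \<eta>)"
    unfolding GR0 Psi_def[symmetric] unfolding GR_norm_def by (simp add: mult.commute)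
qed


end
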